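(* There exists a compact Hausdorff space $Y$ such that $\mathrm{K}_1^w(\mathbb R,Y)\setminus \mathrm{H}_1(\mathbb R,Y)\neq\emptyset$.
   Context: $\mathrm{H}_1(X,Y)$: mappings $f:X\to Y$ with $f^{-1}(V)$ an $F_\sigma$-set for every open $V\subseteq Y$. $\mathrm{K}_1^w(X,Y)$: mappings $f:X\to Y$ with $f^{-1}(V)$ a countable union of functionally closed subsets of $X$ for every functionally open $V\subseteq Y$ (functionally closed = zero set of a continuous real function; functionally open = complement of such). *)

theory Defs
  imports "HOL-Analysis.Analysis"
begin

definition functionally_closedin :: "'a topology \<Rightarrow> 'a set \<Rightarrow> bool" where
  "functionally_closedin X S \<longleftrightarrow>
     (\<exists>g. continuous_map X euclideanreal g \<and> S = {x \<in> topspace X. g x = 0})"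

definition functionally_openin :: "'a topology \<Rightarrow> 'a set \<Rightarrow> bool" where
  "functionally_openin X U \<longleftrightarrow>
     U \<subseteq> topspace X \<and> functionally_closedin X (topspace X - U)"

definition H1 :: "'a topology \<Rightarrow> 'b topology \<Rightarrow> ('a \<Rightarrow> 'b) set" where
  "H1 X Y = {f. (\<forall>x\<in>topspace X. f x \<in> topspace Y) \<and>
      (\<forall>V. openin Y V \<longrightarrow> fsigma_in X {x \<in> topspace X. f x \<in> V})}"

definition K1w :: "'a topology \<Rightarrow> 'b topology \<Rightarrow> ('a \<Rightarrow> 'b) set" where
  "K1w X Y = {f. (\<forall>x\<in>topspace X. f x \<in> topspace Y) \<and>
      (\<forall>V. functionally_openin Y V \<longrightarrow>
         (\<exists>F :: nat \<Rightarrow> 'a set. (\<forall>n. functionally_closedin X (F n)) \<and>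
             {x \<in> topspace X. f x \<in> V} = (\<Union>n. F n)))}"

end

theory Submission
  imports Defs
begin

definition cc :: "real \<Rightarrow> (real set \<Rightarrow> real)" where "cc r = (\<lambda>_. r)"
definition pp :: "real set \<Rightarrow> real" where "pp = (\<lambda>S. if S = {} then 1 else 0)"
definition TT :: "(real set \<Rightarrow> real) set" where "TT = insert pp (range cc)"
definition OpY :: "(real set \<Rightarrow> real) set \<Rightarrow> bool" where
  "OpY U \<longleftrightarrow> U \<subseteq> TT \<and> (pp \<in> U \<longrightarrow> finite (TT - U))"
definition YY :: "(real set \<Rightarrow> real) topology" where "YY = topology OpY"

lemma cc_inj: "inj cc"
  by (rule injI) (metis cc_def)

lemma pp_not_cc: "pp \<noteq> cc r"
proof
  assume "pp = cc r"
  then have "pp {} = pp UNIV" by (simp add: cc_def fun_eq_iff)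
  then show False by (simp add: pp_def)
qed

lemma istop: "istopology OpY"
  unfolding istopology_def
proof (intro conjI allI impI)
  fix S T assume "OpY S" "OpY T"
  then show "OpY (S \<inter> T)" unfolding OpY_def
    by (auto simp: Diff_Int)
next
  fix K assume K: "\<forall>K\<in>K. OpY K"
  show "OpY (\<Union>K)" unfolding OpY_def
  proof (intro conjI impI)
    show "\<Union>K \<subseteq> TT" using K by (auto simp: OpY_def)
    assume "pp \<in> \<Union>K"
    then obtain U where "U \<in> K" "pp \<in> U" by blast
    then have "finite (TT - U)" using K by (auto simp: OpY_def)
    then show "finite (TT - \<Union>K)"
      by (rule finite_subset[rotated]) (use \<open>U \<in> K\<close> in blast)
  qed
qed

lemma openYY: "openin YY U \<longleftrightarrow> OpY U"
  by (simp add: YY_def istop)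

lemma topYY: "topspace YY = TT"
proof -
  have "OpY TT" by (simp add: OpY_def)
  moreover have "\<And>U. OpY U \<Longrightarrow> U \<subseteq> TT" by (simp add: OpY_def)
  ultimately show ?thesis unfolding topspace_def openYY by blast
qed

lemma compactYY: "compact_space YY"
  unfolding compact_space_def compactin_def topYY
proof (intro conjI allI impI)
  fix \<U> assume A: "(\<forall>U\<in>\<U>. openin YY U) \<and> TT \<subseteq> \<Union>\<U>"
  then obtain U0 where U0: "U0 \<in> \<U>" "pp \<in> U0" by (auto simp: TT_def)
  then have fin: "finite (TT - U0)" using A by (auto simp: openYY OpY_def)
  have "\<forall>y\<in>TT - U0. \<exists>U\<in>\<U>. y \<in> U" using A by blast
  then obtain h where h: "\<And>y. y \<in> TT - U0 \<Longrightarrow> h y \<in> \<U> \<and> y \<in> h y" by metis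
  show "\<exists>\<F>. finite \<F> \<and> \<F> \<subseteq> \<U> \<and> TT \<subseteq> \<Union>\<F>"
  proof (intro exI[of _ "insert U0 (h ` (TT - U0))"] conjI)
    show "finite (insert U0 (h ` (TT - U0)))" using fin by simp
    show "insert U0 (h ` (TT - U0)) \<subseteq> \<U>" using U0 h by blast
    show "TT \<subseteq> \<Union> (insert U0 (h ` (TT - U0)))"
    proof
      fix y assume "y \<in> TT"
      then show "y \<in> \<Union> (insert U0 (h ` (TT - U0)))"
        using h[of y] by (cases "y \<in> U0") auto
    qed
  qed
qed auto

lemma hausYY: "Hausdorff_space YY"
  unfolding Hausdorff_space_def topYY
proof (intro allI impI)
  fix x y assume A: "x \<in> TT \<and> y \<in> TT \<and> x \<noteq> y"
  have sing: "openin YY {cc r}" for r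
    using pp_not_cc[of r] by (auto simp: openYY OpY_def TT_def)
  have co: "openin YY (TT - {cc r})" for r
  proof -
    have "finite (TT \<inter> {cc r})" by (rule finite_Int) simp
    then show ?thesis unfolding openYY OpY_def Diff_Diff_Int by auto
  qed
  show "\<exists>U V. openin YY U \<and> openin YY V \<and> x \<in> U \<and> y \<in> V \<and> disjnt U V"
  proof (cases "x = pp")
    case True
    then obtain r where "y = cc r" using A by (auto simp: TT_def)
    then show ?thesis using co[of r] sing[of r] A True
      by (intro exI[of _ "TT - {cc r}"] exI[of _ "{cc r}"]) (auto simp: disjnt_def)
  next
    case False
    then obtain r where r: "x = cc r" using A by (auto simp: TT_def)
    show ?thesis
    proof (cases "y = pp")
      case True
      then show ?thesis using co[of r] sing[of r] A r
        by (intro exI[of _ "{cc r}"] exI[of _ "TT - {cc r}"]) (auto simp: disjnt_def)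
    next
      case False
      then obtain s where "y = cc s" using A by (auto simp: TT_def)
      then show ?thesis using sing[of r] sing[of s] A r
        by (intro exI[of _ "{cc r}"] exI[of _ "{cc s}"]) (auto simp: disjnt_def)
    qed
  qed
qed

lemma closed_fclosed:
  assumes "closed (C::real set)"
  shows "functionally_closedin euclideanreal C"
proof (cases "C = {}")
  case True
  then show ?thesis unfolding functionally_closedin_def
    by (intro exI[of _ "\<lambda>_. 1"]) auto
next
  case False
  then show ?thesis unfolding functionally_closedin_def
    using in_closed_iff_infdist_zero[OF assms False]
    by (intro exI[of _ "\<lambda>x. infdist x C"]) (auto intro!: continuous_intros)
qed

lemma fsigma_K:
  assumes "fsigma_in euclideanreal S"
  shows "\<exists>F :: nat \<Rightarrow> real set. (\<forall>n. functionally_closedin euclideanreal (F n)) \<and> S = (\<Union>n. F n)"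
proof -
  from fsigma_in_ascending[THEN iffD1, OF assms]
  obtain C :: "nat \<Rightarrow> real set" where "\<And>n. closedin euclideanreal (C n)" "\<Union> (range C) = S"
    by blast
  then show ?thesis by (intro exI[of _ C]) (auto intro: closed_fclosed)
qed

lemma countable_fsigma:
  assumes "countable (S :: real set)"
  shows "fsigma_in euclideanreal S"
proof -
  have "S = \<Union> ((\<lambda>x. {x}) ` S)" by blast
  moreover have "fsigma_in euclideanreal (\<Union> ((\<lambda>x. {x}) ` S))"
    by (rule fsigma_in_Union) (auto intro: closed_imp_fsigma_in simp: assms)
  ultimately show ?thesis by simp
qed

lemma cc_K1w: "cc \<in> K1w euclideanreal YY"
  unfolding K1w_def
proof (intro CollectI conjI allI impI ballI)
  fix x :: real show "cc x \<in> topspace YY" by (simp add: topYY TT_def)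
next
  fix V assume "functionally_openin YY V"
  then obtain g where V: "V \<subseteq> TT" and g: "continuous_map YY euclideanreal g"
    and Z: "TT - V = {x \<in> TT. g x = 0}"
    unfolding functionally_openin_def functionally_closedin_def topYY by auto
  have VV: "V = {y \<in> TT. g y \<noteq> 0}" using V Z by blast
  have "fsigma_in euclideanreal {x. cc x \<in> V}"
  proof (cases "pp \<in> V")
    case True
    have "openin YY {y \<in> topspace YY. g y \<in> - {0}}"
      by (rule openin_continuous_map_preimage[OF g]) auto
    then have "OpY V" unfolding openYY topYY VV by auto
    then have "finite (TT - V)" using True by (simp add: OpY_def)
    then have "finite (cc -` (TT - V))" by (rule finite_vimageI) (rule cc_inj)
    moreover have "- {x. cc x \<in> V} = cc -` (TT - V)" by (auto simp: TT_def)
    ultimately have "closed (- {x. cc x \<in> V})" by (simp add: finite_imp_closed)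
    then have "open {x. cc x \<in> V}" by (simp add: closed_def)
    then show ?thesis
      by (intro open_imp_fsigma_in metrizable_space_euclidean) auto
  next
    case False
    have "pp \<in> TT" by (simp add: TT_def)
    then have gp: "g pp = 0" using False VV by blast
    define A where "A n = {y \<in> TT. \<bar>g y\<bar> \<ge> 1 / (real n + 1)}" for n :: nat
    have "closedin YY {y \<in> topspace YY. g y \<in> {t. \<bar>t\<bar> \<ge> 1 / (real n + 1)}}" for n
      by (rule closedin_continuous_map_preimage[OF g])
        (auto intro!: closed_Collect_le continuous_intros)
    then have "closedin YY (A n)" for n by (simp add: A_def topYY)
    then have "OpY (TT - A n)" for n
      using openin_diff[OF openin_topspace, of YY "A n"] by (simp add: topYY openYY)
    moreover have "pp \<in> TT - A n" for n using gp by (simp add: A_def TT_def)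
    ultimately have "finite (TT - (TT - A n))" for n by (simp add: OpY_def)
    moreover have "TT - (TT - A n) = A n" for n by (auto simp: A_def)
    ultimately have finA: "finite (A n)" for n by simp
    have sub: "V \<subseteq> (\<Union>n. A n)"
    proof
      fix y assume "y \<in> V"
      then have y: "y \<in> TT" "g y \<noteq> 0" using VV by auto
      then obtain n where "1 / (real n + 1) < \<bar>g y\<bar>"
        by (metis add.commute of_nat_Suc zero_less_abs_iff nat_approx_posE)
      then have "1 / (real n + 1) \<le> \<bar>g y\<bar>" by simp
      then show "y \<in> (\<Union>n. A n)" using y unfolding A_def by blast
    qed
    have "countable (\<Union>n. A n)" using finA by (auto intro: countable_finite)
    then have "countable (inv cc ` (\<Union>n. A n))" by (rule countable_image)
    moreover have "cc -` (\<Union>n. A n) \<subseteq> inv cc ` (\<Union>n. A n)"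
    proof
      fix x assume "x \<in> cc -` (\<Union>n. A n)"
      then show "x \<in> inv cc ` (\<Union>n. A n)"
        by (intro image_eqI[where f="inv cc" and x="cc x"]) (simp_all add: inv_f_f[OF cc_inj])
    qed
    ultimately have "countable (cc -` (\<Union>n. A n))" by (rule countable_subset[rotated])
    moreover have "{x. cc x \<in> V} \<subseteq> cc -` (\<Union>n. A n)" using sub by auto
    ultimately show ?thesis by (intro countable_fsigma) (rule countable_subset)
  qed
  then show "\<exists>F :: nat \<Rightarrow> real set. (\<forall>n. functionally_closedin euclideanreal (F n)) \<and>
        {x \<in> topspace euclideanreal. cc x \<in> V} = (\<Union>n. F n)"
    using fsigma_K by simp
qed

lemma irr_not_fsigma: "\<not> fsigma_in euclideanreal (- \<rat> :: real set)"
proof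
  assume "fsigma_in euclideanreal (- \<rat> :: real set)"
  from fsigma_in_ascending[THEN iffD1, OF this]
  obtain C :: "nat \<Rightarrow> real set" where C: "\<And>n. closedin euclideanreal (C n)" "\<Union> (range C) = (- \<rat> :: real set)"
    by blast
  define G where "G = range (\<lambda>n. - C n) \<union> (\<lambda>q. - {q}) ` (\<rat> :: real set)"
  have "countable G" unfolding G_def by (auto intro: countable_rat)
  moreover have "openin (top_of_set UNIV) T \<and> UNIV \<subseteq> closure T" if "T \<in> G" for T
  proof -
    { fix n
      have cl: "closed (C n)" using C by auto
      have "interior (C n) = {}"
      proof -
        have "interior (C n) \<inter> \<rat> = {}" using C interior_subset[of "C n"] by blast
        then have "interior (C n) \<inter> closure \<rat> = {}"
          by (simp add: open_Int_closure_eq_empty)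
        then show ?thesis by (simp add: Rats_closure_real)
      qed
      then have "openin (top_of_set UNIV) (- C n) \<and> UNIV \<subseteq> closure (- C n)"
        using cl by (simp add: closure_complement open_Compl) }
    moreover have "openin (top_of_set UNIV) (- {q::real}) \<and> UNIV \<subseteq> closure (- {q})" for q
      by (simp add: closure_complement open_Compl)
    ultimately show ?thesis using that by (auto simp: G_def)
  qed
  ultimately have "UNIV \<subseteq> closure (\<Inter> G)" by (intro Baire) auto
  moreover have "\<Inter> G = {}"
  proof -
    { fix x :: real assume x: "x \<in> \<Inter> G"
      have "x \<notin> \<rat>" using x by (auto simp: G_def)
      then obtain n where "x \<in> C n" using C by auto
      then have False using x by (auto simp: G_def) }
    then show ?thesis by blast
  qed
  ultimately show False by simp
qed

lemma cc_notH1: "cc \<notin> H1 euclideanreal YY"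
proof
  assume "cc \<in> H1 euclideanreal YY"
  moreover have "openin YY (cc ` (- \<rat>))"
    unfolding openYY OpY_def TT_def using pp_not_cc by blast
  ultimately have "fsigma_in euclideanreal {x. cc x \<in> cc ` (- \<rat>)}"
    unfolding H1_def by auto
  moreover have "{x. cc x \<in> cc ` (- \<rat>)} = - \<rat>"
    using cc_inj by (auto simp: inj_eq)
  ultimately show False using irr_not_fsigma by simp
qed

theorem mainTheorem3:
  "\<exists>Y :: (real set \<Rightarrow> real) topology.
     compact_space Y \<and> Hausdorff_space Y \<and>
     K1w euclideanreal Y - H1 euclideanreal Y \<noteq> {}"
  using compactYY hausYY cc_K1w cc_notH1 by blast

end
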